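(* Let $\mathbf d$ be a graphical degree sequence of even length. Then $\mathbf d$ has a realization containing a perfect 2-matching if and only if $\mathbf d$ has a realization containing a perfect matching.
   Context: All graphs are finite and simple. A sequence $(d_1,\dots,d_n)$ is graphical if some simple graph on $\{v_1,\dots,v_n\}$ has $d(v_i)=d_i$ for all $i$; such a graph is a realization. A perfect 2-matching of a graph is a spanning subgraph each of whose connected components is either a $K_2$ (a single edge) or an odd cycle. *)

theory Defs
  imports Main
begin

text \<open>Simple graphs on the vertex set {0..<n} (vertex v_(i+1) of the paper is i here),
  given by a set of 2-element edges.\<close>

definition edges_on :: "nat \<Rightarrow> nat set set" where
  "edges_on n = {e. \<exists>u v. e = {u, v} \<and> u \<noteq> v \<and> u < n \<and> v < n}"

definition is_graph :: "nat \<Rightarrow> nat set set \<Rightarrow> bool" where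
  "is_graph n E \<longleftrightarrow> E \<subseteq> edges_on n"

definition deg :: "nat set set \<Rightarrow> nat \<Rightarrow> nat" where
  "deg E v = card {e \<in> E. v \<in> e}"

definition realization :: "nat list \<Rightarrow> nat set set \<Rightarrow> bool" where
  "realization d E \<longleftrightarrow> is_graph (length d) E \<and> (\<forall>i < length d. deg E i = d ! i)"

definition graphical :: "nat list \<Rightarrow> bool" where
  "graphical d \<longleftrightarrow> (\<exists>E. realization d E)"

definition perfect_matching :: "nat \<Rightarrow> nat set set \<Rightarrow> nat set set \<Rightarrow> bool" where
  "perfect_matching n E M \<longleftrightarrow> M \<subseteq> E \<and> (\<forall>v < n. \<exists>!e. e \<in> M \<and> v \<in> e)"

definition adj :: "nat set set \<Rightarrow> nat \<Rightarrow> nat \<Rightarrow> bool" where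
  "adj H u v \<longleftrightarrow> {u, v} \<in> H"

definition comp :: "nat set set \<Rightarrow> nat \<Rightarrow> nat set" where
  "comp H v = {u. (adj H)\<^sup>*\<^sup>* v u}"

definition is_K2_comp :: "nat set set \<Rightarrow> nat set \<Rightarrow> bool" where
  "is_K2_comp H C \<longleftrightarrow> (\<exists>u v. u \<noteq> v \<and> C = {u, v} \<and> {e \<in> H. e \<subseteq> C} = {{u, v}})"

definition is_odd_cycle_comp :: "nat set set \<Rightarrow> nat set \<Rightarrow> bool" where
  "is_odd_cycle_comp H C \<longleftrightarrow>
     (\<exists>k f. odd k \<and> k \<ge> 3 \<and> bij_betw f {0..<k} C \<and>
        {e \<in> H. e \<subseteq> C} = {{f i, f (Suc i mod k)} | i. i < k})"

definition perfect_2_matching :: "nat \<Rightarrow> nat set set \<Rightarrow> nat set set \<Rightarrow> bool" where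
  "perfect_2_matching n E H \<longleftrightarrow> H \<subseteq> E \<and>
     (\<forall>v < n. is_K2_comp H (comp H v) \<or> is_odd_cycle_comp H (comp H v))"

end

theory Submission
  imports Defs
begin

definition pm_on :: "nat set set \<Rightarrow> nat set \<Rightarrow> nat set set \<Rightarrow> bool" where
 "pm_on E S M \<longleftrightarrow> M \<subseteq> E \<and> (\<forall>e\<in>M. e \<subseteq> S) \<and> (\<forall>v\<in>S. \<exists>e\<in>M. v\<in>e) \<and>
    (\<forall>e1\<in>M. \<forall>e2\<in>M. e1 \<inter> e2 \<noteq> {} \<longrightarrow> e1 = e2)"
definition has_pm :: "nat set set \<Rightarrow> nat set \<Rightarrow> bool" where
 "has_pm E S \<longleftrightarrow> (\<exists>M. pm_on E S M)"

lemma pm_on_mono: "pm_on E S M \<Longrightarrow> (\<forall>e\<in>E. e \<subseteq> S \<longrightarrow> e \<in> E') \<Longrightarrow> pm_on E' S M"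
  unfolding pm_on_def by (metis subset_iff)

lemma pm_mono: "has_pm E S \<Longrightarrow> (\<forall>e\<in>E. e \<subseteq> S \<longrightarrow> e \<in> E') \<Longrightarrow> has_pm E' S"
  unfolding has_pm_def using pm_on_mono by metis

lemma pm_on_union: "pm_on E X M \<Longrightarrow> pm_on E Y N \<Longrightarrow> X \<inter> Y = {} \<Longrightarrow> pm_on E (X \<union> Y) (M \<union> N)"
  unfolding pm_on_def
  apply (intro conjI)
     apply simp
    apply auto[1]
   apply (metis Un_iff)
  by (smt (verit) Int_emptyI UnE disjoint_iff subset_eq)

lemma pm_union: "has_pm E X \<Longrightarrow> has_pm E Y \<Longrightarrow> X \<inter> Y = {} \<Longrightarrow> has_pm E (X \<union> Y)"
  unfolding has_pm_def using pm_on_union by metis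

lemma pm_edge: "{a,b} \<in> E \<Longrightarrow> has_pm E {a,b}"
  unfolding has_pm_def pm_on_def by (intro exI[of _ "{{a,b}}"]) auto

lemma pm_even:
  assumes "has_pm E S" "finite S" "\<forall>e\<in>E. card e = 2"
  shows "even (card S)"
proof -
  obtain M where M: "pm_on E S M" using assms(1) unfolding has_pm_def by metis
  have M1: "M \<subseteq> E" and M2: "\<forall>e\<in>M. e \<subseteq> S" and M3: "\<forall>v\<in>S. \<exists>e\<in>M. v\<in>e"
    and M4: "\<forall>e1\<in>M. \<forall>e2\<in>M. e1 \<inter> e2 \<noteq> {} \<longrightarrow> e1 = e2" using M unfolding pm_on_def by auto
  have SU: "S = \<Union>M" using M2 M3 by auto
  have fin: "finite M" using M2 assms(2) by (metis Pow_iff finite_Pow_iff finite_subset subsetI)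
  have pw: "pairwise disjnt M"
    unfolding pairwise_def disjnt_def using M4 by metis
  have fe: "\<And>A. A \<in> M \<Longrightarrow> finite A" using M2 assms(2) finite_subset by metis
  have "card S = sum card M" unfolding SU
    by (rule card_Union_disjoint[OF pw fe])
  also have "\<dots> = sum (\<lambda>_. 2) M" using M1 assms(3) by (intro sum.cong) auto
  finally show ?thesis by simp
qed

lemma filt2: "{e\<in>{x,y}. P e} = (if P x then {x} else {}) \<union> (if P y then {y} else {})" by auto

lemma switch_deg:
  assumes fin: "finite E" and e: "{a,a'}\<in>E" "{b,b'}\<in>E" "{a,b}\<notin>E" "{a',b'}\<notin>E"
    and dist: "distinct [a,a',b,b']"
  shows "deg ((E - {{a,a'},{b,b'}}) \<union> {{a,b},{a',b'}}) v = deg E v"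
proof -
  let ?A = "{e\<in>E. v\<in>e}"
  let ?X = "{e\<in>{{a,a'},{b,b'}}. v\<in>e}"
  let ?Y = "{e\<in>{{a,b},{a',b'}}. v\<in>e}"
  have eq: "{e \<in> (E - {{a,a'},{b,b'}}) \<union> {{a,b},{a',b'}}. v\<in>e} = (?A - ?X) \<union> ?Y" by auto
  have XA: "?X \<subseteq> ?A" using e by auto
  have YA: "?A \<inter> ?Y = {}" using e by auto
  have fA: "finite ?A" using fin by auto
  have f1: "finite (?A - ?X)" using fA by (rule finite_Diff)
  have f2: "finite ?Y" by (rule finite_subset[of _ "{{a,b},{a',b'}}"]) auto
  have dj: "(?A - ?X) \<inter> ?Y = {}"
    using Int_mono[OF Diff_subset[of ?A ?X] subset_refl[of ?Y]] by (simp only: YA subset_empty)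
  have c1: "card ((?A - ?X) \<union> ?Y) = card (?A - ?X) + card ?Y"
    by (rule card_Un_disjoint[OF f1 f2 dj])
  have c2: "card (?A - ?X) = card ?A - card ?X" using XA fA by (meson card_Diff_subset finite_subset)
  have cX: "card ?X \<le> card ?A" using XA fA by (simp add: card_mono)
  have c3: "card ?X = card ?Y"
  proof -
    have ab: "{a,a'} \<noteq> {b,b'}" "{a,b} \<noteq> {a',b'}" using dist by (auto simp: doubleton_eq_iff)
    show ?thesis unfolding filt2 using dist ab by (cases "v = a"; cases "v = a'"; cases "v = b"; cases "v = b'") (simp_all)
  qed
  show ?thesis unfolding deg_def eq c1 c2 using c3 cX by simp
qed

fun valid :: "nat set set \<Rightarrow> nat \<times> nat \<times> nat set \<Rightarrow> bool" where
  "valid E (a,a',B) \<longleftrightarrow> a\<in>B \<and> a'\<in>B \<and> a\<noteq>a' \<and> {a,a'}\<in>E \<and> has_pm E (B-{a}) \<and> has_pm E (B-{a'})"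

definition blk :: "nat \<times> nat \<times> nat set \<Rightarrow> nat set" where "blk t = snd (snd t)"

fun disj_list :: "nat set \<Rightarrow> (nat \<times> nat \<times> nat set) list \<Rightarrow> bool" where
  "disj_list S [] = True"
| "disj_list S (t#ts) = (S \<inter> blk t = {} \<and> disj_list (S \<union> blk t) ts)"

lemma disj_list_mem: "disj_list S ts \<Longrightarrow> t \<in> set ts \<Longrightarrow> S \<inter> blk t = {}"
proof (induction ts arbitrary: S)
  case Nil then show ?case by simp
next
  case (Cons u ts)
  show ?case
  proof (cases "t = u")
    case True then show ?thesis using Cons.prems by simp
  next
    case False
    then have "t \<in> set ts" using Cons.prems by simp
    then have "(S \<union> blk u) \<inter> blk t = {}" using Cons by simp
    then show ?thesis by auto
  qed
qed

lemma valid_mono: "valid E t \<Longrightarrow> (\<forall>e\<in>E. e \<subseteq> blk t \<longrightarrow> e \<in> E') \<Longrightarrow> valid E' t"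
proof -
  assume v: "valid E t" and h: "\<forall>e\<in>E. e \<subseteq> blk t \<longrightarrow> e \<in> E'"
  obtain a a' B where t: "t = (a,a',B)" by (cases t) auto
  have B: "blk t = B" unfolding t blk_def by simp
  have v': "a\<in>B" "a'\<in>B" "a\<noteq>a'" "{a,a'}\<in>E" "has_pm E (B-{a})" "has_pm E (B-{a'})"
    using v unfolding t by auto
  have "{a,a'} \<in> E'" using h v'(1,2,4) B by simp
  moreover have "has_pm E' (B-{a})" using v'(5) by (rule pm_mono) (use h B in auto)
  moreover have "has_pm E' (B-{a'})" using v'(6) by (rule pm_mono) (use h B in auto)
  ultimately show ?thesis unfolding t using v' by simp
qed

lemma edges_on_Pow: "edges_on n \<subseteq> Pow {0..<n}"
  unfolding edges_on_def by auto

lemma edges_on_card: "e \<in> edges_on n \<Longrightarrow> card e = 2"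
  unfolding edges_on_def by auto

lemma combine:
  assumes "has_pm E S" "has_pm E (B-{x})" "has_pm E (D-{y})" "{x,y} \<in> E" "x \<in> B" "y \<in> D"
    "S \<inter> B = {}" "(S \<union> B) \<inter> D = {}"
  shows "has_pm E (S \<union> B \<union> D)"
proof -
  have eq: "S \<union> B \<union> D = S \<union> ((B - {x}) \<union> ((D - {y}) \<union> {x,y}))" using assms(5,6) by auto
  have h1: "has_pm E ((D - {y}) \<union> {x,y})"
    by (rule pm_union[OF assms(3) pm_edge[OF assms(4)]]) (use assms in auto)
  have h2: "has_pm E ((B - {x}) \<union> ((D - {y}) \<union> {x,y}))"
    by (rule pm_union[OF assms(2) h1]) (use assms in auto)
  show ?thesis unfolding eq
    by (rule pm_union[OF assms(1) h2]) (use assms in auto)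
qed

lemma merge:
  assumes R: "realization d E" and S: "has_pm E S" and vB: "valid E (a,a',B)" and vD: "valid E (b,b',D)"
    and d1: "S \<inter> B = {}" and d2: "(S \<union> B) \<inter> D = {}"
    and sub: "B \<subseteq> {0..<length d}" "D \<subseteq> {0..<length d}"
  shows "\<exists>E'. realization d E' \<and> has_pm E' (S \<union> B \<union> D) \<and>
           (\<forall>X. X \<inter> (B \<union> D) = {} \<longrightarrow> (\<forall>e\<in>E. e \<subseteq> X \<longrightarrow> e \<in> E'))"
proof -
  have B: "a\<in>B" "a'\<in>B" "a\<noteq>a'" "{a,a'}\<in>E" "has_pm E (B-{a})" "has_pm E (B-{a'})"
    using vB by auto
  have D: "b\<in>D" "b'\<in>D" "b\<noteq>b'" "{b,b'}\<in>E" "has_pm E (D-{b})" "has_pm E (D-{b'})"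
    using vD by auto
  have BD: "B \<inter> D = {}" using d2 by auto
  consider "{a,b} \<in> E" | "{a',b'} \<in> E" | "{a,b} \<notin> E" "{a',b'} \<notin> E" by blast
  then show ?thesis
  proof cases
    case 1
    have "has_pm E (S \<union> B \<union> D)" by (rule combine[OF S B(5) D(5) 1 B(1) D(1) d1 d2])
    then show ?thesis using R by metis
  next
    case 2
    have "has_pm E (S \<union> B \<union> D)" by (rule combine[OF S B(6) D(6) 2 B(2) D(2) d1 d2])
    then show ?thesis using R by metis
  next
    case 3
    define E' where "E' = (E - {{a,a'},{b,b'}}) \<union> {{a,b},{a',b'}}"
    have g: "E \<subseteq> edges_on (length d)" using R unfolding realization_def is_graph_def by simp
    have fin: "finite E" using g edges_on_Pow by (meson finite_Pow_iff finite_atLeastLessThan finite_subset subset_trans)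
    have dist: "distinct [a,a',b,b']" using B D BD by auto
    have deg: "\<And>v. deg E' v = deg E v" unfolding E'_def
      by (rule switch_deg[OF fin B(4) D(4) 3 dist])
    have lt: "a < length d" "b < length d" "a' < length d" "b' < length d" using sub B D by auto
    have new: "{a,b} \<in> edges_on (length d)" "{a',b'} \<in> edges_on (length d)"
      unfolding edges_on_def mem_Collect_eq
      by (rule exI[of _ a], rule exI[of _ b], use lt dist in simp,
          rule exI[of _ a'], rule exI[of _ b'], use lt dist in simp)
    have g': "E' \<subseteq> edges_on (length d)" unfolding E'_def using g new by auto
    have R': "realization d E'" using R g' deg unfolding realization_def is_graph_def by simp
    have keep: "\<And>Y. a \<notin> Y \<Longrightarrow> b \<notin> Y \<Longrightarrow> \<forall>e\<in>E. e \<subseteq> Y \<longrightarrow> e \<in> E'"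
    proof (intro ballI impI)
      fix Y e assume "a \<notin> Y" "b \<notin> Y" "e \<in> E" "e \<subseteq> Y"
      then have "e \<noteq> {a,a'}" "e \<noteq> {b,b'}" by auto
      then show "e \<in> E'" unfolding E'_def using \<open>e \<in> E\<close> by simp
    qed
    have "has_pm E' S" by (rule pm_mono[OF S keep]) (use d1 d2 B D in auto)
    moreover have "has_pm E' (B - {a})" by (rule pm_mono[OF B(5) keep]) (use BD D in auto)
    moreover have "has_pm E' (D - {b})" by (rule pm_mono[OF D(5) keep]) (use BD B in auto)
    moreover have "{a,b} \<in> E'" unfolding E'_def by simp
    ultimately have "has_pm E' (S \<union> B \<union> D)" using combine B(1) D(1) d1 d2 by metis
    moreover have "\<forall>X. X \<inter> (B \<union> D) = {} \<longrightarrow> (\<forall>e\<in>E. e \<subseteq> X \<longrightarrow> e \<in> E')"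
    proof (intro allI impI)
      fix X assume "X \<inter> (B \<union> D) = {}"
      then have "a \<notin> X" "b \<notin> X" using B D by auto
      then show "\<forall>e\<in>E. e \<subseteq> X \<longrightarrow> e \<in> E'" by (rule keep)
    qed
    ultimately show ?thesis using R' by metis
  qed
qed

lemma pm_full: "has_pm E {0..<n} \<Longrightarrow> \<exists>M. perfect_matching n E M"
proof -
  assume "has_pm E {0..<n}"
  then obtain M where M: "pm_on E {0..<n} M" unfolding has_pm_def by metis
  have M1: "M \<subseteq> E" and M3: "\<forall>v\<in>{0..<n}. \<exists>e\<in>M. v\<in>e"
    and M4: "\<forall>e1\<in>M. \<forall>e2\<in>M. e1 \<inter> e2 \<noteq> {} \<longrightarrow> e1 = e2" using M unfolding pm_on_def by auto
  have "\<forall>v < n. \<exists>!e. e \<in> M \<and> v \<in> e"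
  proof (intro allI impI)
    fix v assume "v < n"
    then have "v \<in> {0..<n}" by simp
    then obtain e where e: "e \<in> M" "v \<in> e" using M3 by metis
    show "\<exists>!e. e \<in> M \<and> v \<in> e"
    proof (rule ex1I[of _ e])
      show "e \<in> M \<and> v \<in> e" using e by simp
      fix e' assume "e' \<in> M \<and> v \<in> e'"
      then show "e' = e" using M4 e by (metis IntI empty_iff)
    qed
  qed
  then show ?thesis unfolding perfect_matching_def using M1 by metis
qed

lemma main:
  assumes "realization d E" "has_pm E S" "\<forall>t\<in>set Bs. valid E t" "disj_list S Bs"
    "S \<union> \<Union>(blk ` set Bs) = {0..<length d}" "even (length d)"
  shows "\<exists>E' M. realization d E' \<and> perfect_matching (length d) E' M"
  using assms
proof (induction Bs arbitrary: E S rule: induct_list012)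
  case 1
  then have "S = {0..<length d}" by simp
  then show ?case using 1 pm_full by metis
next
  case (2 x)
  obtain a a' B where x: "x = (a,a',B)" by (cases x) auto
  have bx: "blk x = B" unfolding x blk_def by simp
  have cov: "S \<union> B = {0..<length d}" using 2 bx by simp
  have dj: "S \<inter> B = {}" using 2 bx by simp
  have v: "a \<in> B" "has_pm E (B - {a})" using 2 x by auto
  have fS: "finite S" "finite B" using cov by (metis finite_Un finite_atLeastLessThan)+
  have ce: "\<forall>e\<in>E. card e = 2" using 2(1) edges_on_card unfolding realization_def is_graph_def by auto
  have eS: "even (card S)" by (rule pm_even[OF 2(2) fS(1) ce])
  have eB: "even (card (B - {a}))" by (rule pm_even[OF v(2) _ ce]) (use fS in simp)
  have cB: "card B = Suc (card (B - {a}))" using v(1) fS(2) by (metis card_Suc_Diff1)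
  have "card (S \<union> B) = card S + card B" by (rule card_Un_disjoint[OF fS dj])
  then have "length d = card S + card B" using cov by simp
  then have "odd (length d)" using eS eB cB by simp
  then show ?case using 2(6) by simp
next
  case (3 x y zs)
  obtain a a' B where x: "x = (a,a',B)" by (cases x) auto
  obtain b b' D where y: "y = (b,b',D)" by (cases y) auto
  have bx: "blk x = B" unfolding x blk_def by simp
  have by': "blk y = D" unfolding y blk_def by simp
  have dl: "S \<inter> B = {}" "(S \<union> B) \<inter> D = {}" "disj_list (S \<union> B \<union> D) zs"
    using "3.prems"(4) bx by' by auto
  have cov: "S \<union> B \<union> D \<union> \<Union>(blk ` set zs) = {0..<length d}" using "3.prems"(5) bx by' by auto
  have sub: "B \<subseteq> {0..<length d}" "D \<subseteq> {0..<length d}" using cov by auto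
  have vB: "valid E (a,a',B)" and vD: "valid E (b,b',D)" using "3.prems"(3) x y by auto
  obtain E' where E': "realization d E'" "has_pm E' (S \<union> B \<union> D)"
    "\<forall>X. X \<inter> (B \<union> D) = {} \<longrightarrow> (\<forall>e\<in>E. e \<subseteq> X \<longrightarrow> e \<in> E')"
    using merge[OF "3.prems"(1,2) vB vD dl(1,2) sub] by metis
  have vz: "\<forall>t\<in>set zs. valid E' t"
  proof
    fix t assume t: "t \<in> set zs"
    then have "(S \<union> B \<union> D) \<inter> blk t = {}" using disj_list_mem[OF dl(3)] by metis
    then have "blk t \<inter> (B \<union> D) = {}" by auto
    then have "\<forall>e\<in>E. e \<subseteq> blk t \<longrightarrow> e \<in> E'" using E'(3) by metis
    moreover have "valid E t" using t "3.prems"(3) by simp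
    ultimately show "valid E' t" using valid_mono by metis
  qed
  show ?case by (rule "3.IH"(1)[OF E'(1,2) vz dl(3) cov "3.prems"(6)])
qed

lemma uniq: "\<exists>!x. P x \<Longrightarrow> P a \<Longrightarrow> P b \<Longrightarrow> a = b" by metis

lemma edge_in: "e \<in> edges_on n \<Longrightarrow> v \<in> e \<Longrightarrow> \<exists>w. e = {v,w} \<and> v \<noteq> w \<and> v < n \<and> w < n"
  unfolding edges_on_def by auto

lemma adj_sym: "symp (adj H)"
  unfolding symp_def adj_def by (simp add: insert_commute)

lemma comp_self: "v \<in> comp H v" unfolding comp_def by simp

lemma comp_sym: "u \<in> comp H v \<Longrightarrow> v \<in> comp H u"
  unfolding comp_def using symp_rtranclp[OF adj_sym] by (metis mem_Collect_eq sympD)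

lemma comp_eq: "u \<in> comp H v \<Longrightarrow> comp H u = comp H v"
proof -
  assume u: "u \<in> comp H v"
  have 1: "(adj H)\<^sup>*\<^sup>* v u" using u unfolding comp_def by simp
  have 2: "(adj H)\<^sup>*\<^sup>* u v" using comp_sym[OF u] unfolding comp_def by simp
  show ?thesis unfolding comp_def using 1 2 by (metis (no_types, lifting) Collect_cong rtranclp_trans)
qed

lemma comp_disj: "x \<in> comp H u \<Longrightarrow> x \<in> comp H v \<Longrightarrow> comp H u = comp H v"
  using comp_eq by metis

lemma comp_sub: assumes "H \<subseteq> edges_on n" "v < n" shows "comp H v \<subseteq> {0..<n}"
proof
  fix u assume "u \<in> comp H v"
  then have "(adj H)\<^sup>*\<^sup>* v u" unfolding comp_def by simp
  then show "u \<in> {0..<n}"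
  proof (induction rule: rtranclp_induct)
    case base then show ?case using assms by simp
  next
    case (step y z)
    then have "{y,z} \<in> edges_on n" using assms(1) unfolding adj_def by auto
    then show ?case using edge_in[of "{y,z}" n z] by (metis atLeastLessThan_iff doubleton_eq_iff insertI1 insert_commute zero_le)
  qed
qed

lemma suc_mod: "i < k \<Longrightarrow> Suc i mod k = (if Suc i = k then 0 else Suc i)"
  by auto

lemma cycle_pm:
  assumes k: "odd k" "3 \<le> k" and inj: "inj_on f {0..<k}" and img: "f ` {0..<k} = C"
    and ed: "\<forall>i<k. {f i, f (Suc i mod k)} \<in> E"
  shows "has_pm E (C - {f 0})"
proof -
  define M where "M = (\<lambda>i. {f i, f (Suc i)}) ` {i. odd i \<and> i < k}"
  have sk: "\<And>i. odd i \<Longrightarrow> i < k \<Longrightarrow> Suc i < k" using k by (metis Suc_lessI even_Suc)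
  have finj: "\<And>i j. i < k \<Longrightarrow> j < k \<Longrightarrow> f i = f j \<Longrightarrow> i = j" using inj unfolding inj_on_def by simp
  have fC: "\<And>i. i < k \<Longrightarrow> f i \<in> C" using img by auto
  have "M \<subseteq> E"
  proof
    fix e assume "e \<in> M"
    then obtain i where i: "odd i" "i < k" "e = {f i, f (Suc i)}" unfolding M_def by auto
    have "Suc i mod k = Suc i" using sk[OF i(1,2)] by simp
    then show "e \<in> E" using ed i by metis
  qed
  moreover have "\<forall>e\<in>M. e \<subseteq> C - {f 0}"
  proof
    fix e assume "e \<in> M"
    then obtain i where i: "odd i" "i < k" "e = {f i, f (Suc i)}" unfolding M_def by auto
    have s: "Suc i < k" by (rule sk[OF i(1,2)])
    have "f i \<noteq> f 0" using finj[OF i(2), of 0] i(1) k by auto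
    moreover have "f (Suc i) \<noteq> f 0" using finj[OF s, of 0] k by auto
    ultimately show "e \<subseteq> C - {f 0}" using i fC s by auto
  qed
  moreover have "\<forall>v\<in>C - {f 0}. \<exists>e\<in>M. v \<in> e"
  proof
    fix v assume v: "v \<in> C - {f 0}"
    then obtain i where i: "i < k" "v = f i" using img by auto
    have i0: "i \<noteq> 0" using i v by (metis DiffD2 singletonI)
    show "\<exists>e\<in>M. v \<in> e"
    proof (cases "odd i")
      case True
      then have "{f i, f (Suc i)} \<in> M" unfolding M_def using i by auto
      then show ?thesis using i by auto
    next
      case False
      then obtain j where j: "i = Suc j" "odd j" using i0 by (metis even_Suc not0_implies_Suc)
      then have "{f j, f (Suc j)} \<in> M" unfolding M_def using i by auto
      then show ?thesis using i j by auto
    qed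
  qed
  moreover have "\<forall>e1\<in>M. \<forall>e2\<in>M. e1 \<inter> e2 \<noteq> {} \<longrightarrow> e1 = e2"
  proof (intro ballI impI)
    fix e1 e2 assume e1: "e1 \<in> M" and e2: "e2 \<in> M" and ne: "e1 \<inter> e2 \<noteq> {}"
    obtain i where i: "odd i" "i < k" "e1 = {f i, f (Suc i)}" using e1 unfolding M_def by auto
    obtain j where j: "odd j" "j < k" "e2 = {f j, f (Suc j)}" using e2 unfolding M_def by auto
    have si: "Suc i < k" by (rule sk[OF i(1,2)])
    have sj: "Suc j < k" by (rule sk[OF j(1,2)])
    obtain x where x: "x \<in> e1" "x \<in> e2" using ne by blast
    then have xx: "(x = f i \<or> x = f (Suc i)) \<and> (x = f j \<or> x = f (Suc j))" using i j by simp
    then consider "f i = f j" | "f i = f (Suc j)" | "f (Suc i) = f j" | "f (Suc i) = f (Suc j)" by metis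
    then have "i = j"
    proof cases
      case 1 then show ?thesis using finj i j by metis
    next
      case 2 then have "i = Suc j" using finj i sj by metis
      then show ?thesis using i(1) j(1) by (metis even_Suc)
    next
      case 3 then have "Suc i = j" using finj si j by metis
      then show ?thesis using i(1) j(1) by (metis even_Suc)
    next
      case 4 then have "Suc i = Suc j" using finj si sj by metis
      then show ?thesis by simp
    qed
    then show "e1 = e2" using i j by simp
  qed
  ultimately have "pm_on E (C - {f 0}) M" unfolding pm_on_def by simp
  then show ?thesis unfolding has_pm_def by metis
qed

lemma odd_cycle_valid:
  assumes H: "H \<subseteq> E" and oc: "is_odd_cycle_comp H C"
  shows "\<exists>t. valid E t \<and> blk t = C"
proof -
  obtain k f where k: "odd k" "3 \<le> k" and bij: "bij_betw f {0..<k} C"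
    and eq: "{e \<in> H. e \<subseteq> C} = {{f i, f (Suc i mod k)} | i. i < k}"
    using oc unfolding is_odd_cycle_comp_def by blast
  have inj: "inj_on f {0..<k}" and img: "f ` {0..<k} = C" using bij unfolding bij_betw_def by auto
  have ed: "\<forall>i<k. {f i, f (Suc i mod k)} \<in> E"
  proof (intro allI impI)
    fix i assume "i < k"
    then have "{f i, f (Suc i mod k)} \<in> {e \<in> H. e \<subseteq> C}" unfolding eq by blast
    then show "{f i, f (Suc i mod k)} \<in> E" using H by auto
  qed
  define g where "g i = f (Suc i mod k)" for i
  have k0: "0 < k" using k by simp
  have inj2: "inj_on g {0..<k}"
  proof (rule inj_onI)
    fix i j assume i: "i \<in> {0..<k}" and j: "j \<in> {0..<k}" and gij: "g i = g j"
    have "Suc i mod k < k" "Suc j mod k < k" using k0 by auto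
    then have "Suc i mod k = Suc j mod k" using inj gij unfolding g_def inj_on_def by auto
    then show "i = j" using i j suc_mod[of i k] suc_mod[of j k] by (auto split: if_splits)
  qed
  have img2: "g ` {0..<k} = C"
  proof
    show "g ` {0..<k} \<subseteq> C" unfolding g_def using img k0 by auto
    show "C \<subseteq> g ` {0..<k}"
    proof
      fix v assume "v \<in> C"
      then obtain j where j: "j < k" "v = f j" using img by auto
      show "v \<in> g ` {0..<k}"
      proof (cases j)
        case 0
        then have "g (k - 1) = v" unfolding g_def using j k0 by simp
        then show ?thesis using k0 by (metis atLeastLessThan_iff diff_less imageI less_numeral_extra(1) zero_le)
      next
        case (Suc j')
        then have "g j' = v" unfolding g_def using j by simp
        then show ?thesis using j Suc by (metis Suc_lessD atLeastLessThan_iff image_eqI zero_le)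
      qed
    qed
  qed
  have ed2: "\<forall>i<k. {g i, g (Suc i mod k)} \<in> E"
  proof (intro allI impI)
    fix i assume "i < k"
    have "Suc i mod k < k" using k0 by simp
    then show "{g i, g (Suc i mod k)} \<in> E" unfolding g_def using ed by simp
  qed
  have p0: "has_pm E (C - {f 0})" by (rule cycle_pm[OF k inj img ed])
  have p1: "has_pm E (C - {g 0})" by (rule cycle_pm[OF k inj2 img2 ed2])
  have g0: "g 0 = f 1" unfolding g_def using k by simp
  have k1: "1 < k" using k by simp
  have f01: "f 0 \<noteq> f 1" using inj_onD[OF inj, of 0 1] k1 by auto
  have m1: "Suc 0 mod k = 1" using k1 by simp
  have "{f 0, f (Suc 0 mod k)} \<in> E" using ed k0 by blast
  then have e01: "{f 0, f 1} \<in> E" using m1 by simp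
  have fin: "f 0 \<in> C" "f 1 \<in> C" using img k by auto
  have "valid E (f 0, f 1, C)" using p0 p1 g0 f01 e01 fin by simp
  moreover have "blk (f 0, f 1, C) = C" unfolding blk_def by simp
  ultimately show ?thesis by metis
qed

lemma disj_list_intro:
  "distinct (map blk ts) \<Longrightarrow> (\<forall>t\<in>set ts. S \<inter> blk t = {}) \<Longrightarrow>
   (\<forall>t\<in>set ts. \<forall>u\<in>set ts. blk t \<noteq> blk u \<longrightarrow> blk t \<inter> blk u = {}) \<Longrightarrow> disj_list S ts"
proof (induction ts arbitrary: S)
  case Nil then show ?case by simp
next
  case (Cons t ts)
  have "\<forall>u\<in>set ts. (S \<union> blk t) \<inter> blk u = {}"
  proof
    fix u assume u: "u \<in> set ts"
    then have "blk t \<noteq> blk u" using Cons.prems(1) by auto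
    then have "blk t \<inter> blk u = {}" using Cons.prems(3) u by simp
    moreover have "S \<inter> blk u = {}" using Cons.prems(2) u by simp
    ultimately show "(S \<union> blk t) \<inter> blk u = {}" by auto
  qed
  then have "disj_list (S \<union> blk t) ts" using Cons by simp
  then show ?case using Cons.prems(2) by simp
qed

lemma extract_blocks:
  assumes R: "realization d E" and P: "perfect_2_matching (length d) E H"
  shows "\<exists>S Bs. has_pm E S \<and> (\<forall>t\<in>set Bs. valid E t) \<and> disj_list S Bs \<and>
           S \<union> \<Union>(blk ` set Bs) = {0..<length d}"
proof -
  let ?n = "length d"
  have HE: "H \<subseteq> E" using P unfolding perfect_2_matching_def by simp
  have Eg: "E \<subseteq> edges_on ?n" using R unfolding realization_def is_graph_def by simp
  have Hg: "H \<subseteq> edges_on ?n" using HE Eg by simp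
  have cs: "\<forall>v < ?n. is_K2_comp H (comp H v) \<or> is_odd_cycle_comp H (comp H v)"
    using P unfolding perfect_2_matching_def by simp
  define CS where "CS = comp H ` {0..<?n}"
  define K where "K = {C \<in> CS. is_K2_comp H C}"
  define Oc where "Oc = CS - K"
  define S where "S = \<Union>K"
  have CSd: "\<And>C C' x. C \<in> CS \<Longrightarrow> C' \<in> CS \<Longrightarrow> x \<in> C \<Longrightarrow> x \<in> C' \<Longrightarrow> C = C'"
    unfolding CS_def using comp_disj by blast
  have Kin: "\<And>C. C \<in> K \<Longrightarrow> C \<in> H"
  proof -
    fix C assume "C \<in> K"
    then have "is_K2_comp H C" unfolding K_def by simp
    then obtain u v where "C = {u,v}" "{e \<in> H. e \<subseteq> C} = {{u, v}}" unfolding is_K2_comp_def by blast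
    then show "C \<in> H" by (metis (no_types, lifting) insertI1 mem_Collect_eq)
  qed
  have "pm_on E S K" unfolding pm_on_def
  proof (intro conjI)
    show "K \<subseteq> E" using Kin HE by auto
    show "\<forall>e\<in>K. e \<subseteq> S" unfolding S_def by auto
    show "\<forall>v\<in>S. \<exists>e\<in>K. v \<in> e" unfolding S_def by auto
    show "\<forall>e1\<in>K. \<forall>e2\<in>K. e1 \<inter> e2 \<noteq> {} \<longrightarrow> e1 = e2"
      using CSd unfolding K_def by blast
  qed
  then have pmS: "has_pm E S" unfolding has_pm_def by metis
  have Oval: "\<And>C. C \<in> Oc \<Longrightarrow> \<exists>t. valid E t \<and> blk t = C"
  proof -
    fix C assume C: "C \<in> Oc"
    then obtain v where v: "v < ?n" "C = comp H v" "\<not> is_K2_comp H C" unfolding Oc_def K_def CS_def by auto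
    then have "is_odd_cycle_comp H C" using cs by metis
    then show "\<exists>t. valid E t \<and> blk t = C" by (rule odd_cycle_valid[OF HE])
  qed
  define bo where "bo C = (SOME t. valid E t \<and> blk t = C)" for C
  have bo: "\<And>C. C \<in> Oc \<Longrightarrow> valid E (bo C) \<and> blk (bo C) = C"
    unfolding bo_def using Oval by (metis (mono_tags, lifting) someI_ex)
  have finO: "finite Oc" unfolding Oc_def CS_def by simp
  obtain L where L: "set L = Oc" "distinct L" using finite_distinct_list[OF finO] by metis
  define Bs where "Bs = map bo L"
  have mB: "map blk Bs = L" unfolding Bs_def using bo L(1) unfolding map_map by (intro map_idI) (simp add: comp_def)
  have sB: "blk ` set Bs = Oc" using mB L(1) by (metis set_map)
  have vB: "\<forall>t\<in>set Bs. valid E t" unfolding Bs_def using bo L(1) by auto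
  have dB: "disj_list S Bs"
  proof (rule disj_list_intro)
    show "distinct (map blk Bs)" using mB L(2) by simp
    show "\<forall>t\<in>set Bs. S \<inter> blk t = {}"
    proof
      fix t assume t: "t \<in> set Bs"
      then have O1: "blk t \<in> Oc" using sB by blast
      show "S \<inter> blk t = {}"
      proof (rule ccontr)
        assume "S \<inter> blk t \<noteq> {}"
        then obtain x C where "C \<in> K" "x \<in> C" "x \<in> blk t" unfolding S_def by blast
        moreover have "C \<in> CS" "blk t \<in> CS" using \<open>C \<in> K\<close> O1 unfolding K_def Oc_def by auto
        ultimately have "C = blk t" using CSd by metis
        then show False using \<open>C \<in> K\<close> O1 unfolding Oc_def by simp
      qed
    qed
    show "\<forall>t\<in>set Bs. \<forall>u\<in>set Bs. blk t \<noteq> blk u \<longrightarrow> blk t \<inter> blk u = {}"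
    proof (intro ballI impI)
      fix t u assume t: "t \<in> set Bs" and u: "u \<in> set Bs" and ne: "blk t \<noteq> blk u"
      have "blk t \<in> CS" "blk u \<in> CS" using t u sB unfolding Oc_def by auto
      then show "blk t \<inter> blk u = {}" using CSd ne by blast
    qed
  qed
  have cov: "S \<union> \<Union>(blk ` set Bs) = {0..<?n}"
  proof -
    have "S \<union> \<Union>(blk ` set Bs) = \<Union>CS" unfolding sB S_def Oc_def K_def by auto
    also have "\<dots> = {0..<?n}"
    proof
      show "\<Union>CS \<subseteq> {0..<?n}" unfolding CS_def using comp_sub[OF Hg] by (meson UN_least atLeastLessThan_iff)
      show "{0..<?n} \<subseteq> \<Union>CS" unfolding CS_def using comp_self by fastforce
    qed
    finally show ?thesis .
  qed
  show ?thesis using pmS vB dB cov by metis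
qed

lemma pm_is_p2m:
  assumes R: "realization d E" and M: "perfect_matching (length d) E M"
  shows "perfect_2_matching (length d) E M"
proof -
  let ?n = "length d"
  have ME: "M \<subseteq> E" and U: "\<forall>v < ?n. \<exists>!e. e \<in> M \<and> v \<in> e" using M unfolding perfect_matching_def by auto
  have Eg: "E \<subseteq> edges_on ?n" using R unfolding realization_def is_graph_def by simp
  have Mg: "M \<subseteq> edges_on ?n" using ME Eg by simp
  have "is_K2_comp M (comp M v)" if v: "v < ?n" for v
  proof -
    obtain e where e: "e \<in> M" "v \<in> e" using U v by metis
    have ue: "\<And>x e'. x < ?n \<Longrightarrow> x \<in> e \<Longrightarrow> e' \<in> M \<Longrightarrow> x \<in> e' \<Longrightarrow> e' = e"
      using U e uniq by metis
    obtain w where w: "e = {v,w}" "v \<noteq> w" "w < ?n" using edge_in[of e ?n v] e Mg by blast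
    have "comp M v \<subseteq> {v,w}"
    proof
      fix u assume "u \<in> comp M v"
      then have "(adj M)\<^sup>*\<^sup>* v u" unfolding comp_def by simp
      then show "u \<in> {v,w}"
      proof (induction rule: rtranclp_induct)
        case base then show ?case by simp
      next
        case (step y z)
        then have yz: "{y,z} \<in> M" unfolding adj_def by simp
        have "y < ?n" using step.IH v w by auto
        then have "{y,z} = e" using ue[of y "{y,z}"] yz step.IH w by auto
        then show ?case using w by auto
      qed
    qed
    moreover have "{v,w} \<subseteq> comp M v"
    proof -
      have "adj M v w" unfolding adj_def using e w by simp
      then show ?thesis using comp_self[of v M] unfolding comp_def by auto
    qed
    ultimately have cv: "comp M v = {v,w}" by auto
    have "{e' \<in> M. e' \<subseteq> {v,w}} = {{v,w}}"
    proof
      show "{{v,w}} \<subseteq> {e' \<in> M. e' \<subseteq> {v,w}}" using e w by simp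
      show "{e' \<in> M. e' \<subseteq> {v,w}} \<subseteq> {{v,w}}"
      proof
        fix e' assume e': "e' \<in> {e' \<in> M. e' \<subseteq> {v,w}}"
        then have "e' \<in> edges_on ?n" using Mg by auto
        then obtain x where x: "x \<in> e'" unfolding edges_on_def by auto
        then have "x \<in> {v,w}" using e' by auto
        then have "x < ?n" "x \<in> e" using v w by auto
        then have "e' = e" using ue x e' by simp
        then show "e' \<in> {{v,w}}" using w by simp
      qed
    qed
    then show ?thesis unfolding cv is_K2_comp_def using w(2) by metis
  qed
  then show ?thesis unfolding perfect_2_matching_def using ME by simp
qed

theorem theorem19:
  fixes d :: "nat list"
  assumes "graphical d" and "even (length d)"
  shows "(\<exists>E H. realization d E \<and> perfect_2_matching (length d) E H) \<longleftrightarrow>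
         (\<exists>E M. realization d E \<and> perfect_matching (length d) E M)"
proof
  assume "\<exists>E H. realization d E \<and> perfect_2_matching (length d) E H"
  then obtain E H where R: "realization d E" and P: "perfect_2_matching (length d) E H" by blast
  obtain S Bs where "has_pm E S" "\<forall>t\<in>set Bs. valid E t" "disj_list S Bs"
      "S \<union> \<Union>(blk ` set Bs) = {0..<length d}" using extract_blocks[OF R P] by blast
  then show "\<exists>E M. realization d E \<and> perfect_matching (length d) E M"
    using main[OF R _ _ _ _ assms(2)] by blast
next
  assume "\<exists>E M. realization d E \<and> perfect_matching (length d) E M"
  then obtain E M where R: "realization d E" and M: "perfect_matching (length d) E M" by blast
  then show "\<exists>E H. realization d E \<and> perfect_2_matching (length d) E H"
    using pm_is_p2m[OF R M] by blast
qed

end
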